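(* Let $\nu_1,\lambda_1,\lambda_2\ge0$ and measurable $\beta_1\colon\mathcal X\to(0,\infty)$, $\beta_2\colon\mathcal X\times\mathcal Y_1\to(0,\infty)$ satisfy $\Sigma_2(y_1,y_2)\le1$ and $\Sigma_1(y_1)\le1$ for all $(y_1,y_2)$. Fix an $(M_1,M_2,d_1,d_2,\epsilon_1,\epsilon_2)$ code and define $$F=(1+\nu_1)\log\frac1{\beta_1(X)}-\lambda_1d_1-\lambda_2d_2-\nu_1\log M_1 .$$ Then for all $\gamma_1,\gamma_2>0$ both $$\epsilon_1\ge\mathbb P[F_1\ge\log M_1+\gamma_1]-e^{-\gamma_1}$$ and $$\epsilon_2\ge\mathbb P\big[\{F\ge\log M_2+\nu_1\gamma_1+\gamma_2\}\cup\{F_1\ge\log M_1+\gamma_1\}\big]-e^{-\gamma_1}-e^{-\gamma_2}$$ hold.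
   Context: $X$ has law $P_X$ on $\mathcal X$; $\mathsf d_1\colon\mathcal X\times\mathcal Y_1\to[0,\infty)$, $\mathsf d_2\colon\mathcal X\times\mathcal Y_2\to[0,\infty)$ measurable, all $\sigma$-algebras containing singletons. $\Sigma_2(y_1,y_2)=\mathbb E\big[\exp(-\frac{\lambda_1}{1+\nu_1}\mathsf d_1(X,y_1)-\lambda_2\mathsf d_2(X,y_2))/(\beta_1(X)\beta_2(X|y_1)^{\nu_1/(1+\nu_1)})\big]$, $\Sigma_1(y_1)=\mathbb E\big[\exp(-\frac{\lambda_1}{1+\nu_1}\mathsf d_1(X,y_1))\beta_2(X|y_1)^{1/(1+\nu_1)}/\beta_1(X)\big]$, expectations over $X\sim P_X$. An $(M_1,M_2,d_1,d_2,\epsilon_1,\epsilon_2)$ code: positive integers $M_1\le M_2$, possibly randomized encoders $P_{W_1|X}$ into $\{1,\dots,M_1\}$, $P_{W_2|XW_1}$ into $\{1,\dots,\lfloor M_2/M_1\rfloor\}$, decoders $P_{Y_1|W_1}$, $P_{Y_2|W_1W_2}$, with $\mathcal A_1=\{\mathsf d_1(X,Y_1)\le d_1\}$, $\mathcal A_2=\mathcal A_1\cap\{\mathsf d_2(X,Y_2)\le d_2\}$, $\mathbb P[\mathcal A_1^c]\le\epsilon_1$, $\mathbb P[\mathcal A_2^c]\le\epsilon_2$. $F_1=\log\frac{\beta_2(X|Y_1)^{1/(1+\nu_1)}}{\beta_1(X)}-\frac{\lambda_1}{1+\nu_1}d_1$, where $Y_1$ is the code's first-stage output. Logarithms natural.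 *)

theory Defs
  imports "HOL-Probability.Probability"
begin

definition Sigma2 :: "'x measure \<Rightarrow> ('x \<Rightarrow> 'y1 \<Rightarrow> real) \<Rightarrow> ('x \<Rightarrow> 'y2 \<Rightarrow> real)
    \<Rightarrow> ('x \<Rightarrow> real) \<Rightarrow> ('x \<Rightarrow> 'y1 \<Rightarrow> real) \<Rightarrow> real \<Rightarrow> real \<Rightarrow> real \<Rightarrow> 'y1 \<Rightarrow> 'y2 \<Rightarrow> ennreal" where
  "Sigma2 PX dist1 dist2 beta1 beta2 nu1 lam1 lam2 y1 y2 =
     (\<integral>\<^sup>+ x. ennreal (exp (- (lam1 / (1 + nu1)) * dist1 x y1 - lam2 * dist2 x y2)
         / (beta1 x * beta2 x y1 powr (nu1 / (1 + nu1)))) \<partial>PX)"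

definition Sigma1 :: "'x measure \<Rightarrow> ('x \<Rightarrow> 'y1 \<Rightarrow> real)
    \<Rightarrow> ('x \<Rightarrow> real) \<Rightarrow> ('x \<Rightarrow> 'y1 \<Rightarrow> real) \<Rightarrow> real \<Rightarrow> real \<Rightarrow> 'y1 \<Rightarrow> ennreal" where
  "Sigma1 PX dist1 beta1 beta2 nu1 lam1 y1 =
     (\<integral>\<^sup>+ x. ennreal (exp (- (lam1 / (1 + nu1)) * dist1 x y1)
         * beta2 x y1 powr (1 / (1 + nu1)) / beta1 x) \<partial>PX)"

definition code_law :: "'x measure \<Rightarrow> 'y1 measure \<Rightarrow> 'y2 measure \<Rightarrow> ('x \<Rightarrow> nat measure)
    \<Rightarrow> ('x \<times> nat \<Rightarrow> nat measure) \<Rightarrow> (nat \<Rightarrow> 'y1 measure) \<Rightarrow> (nat \<times> nat \<Rightarrow> 'y2 measure)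
    \<Rightarrow> ('x \<times> 'y1 \<times> 'y2) measure" where
  "code_law PX MY1 MY2 E1 E2 G1 G2 =
     PX \<bind> (\<lambda>x. E1 x \<bind> (\<lambda>w1. E2 (x, w1) \<bind> (\<lambda>w2. G1 w1 \<bind> (\<lambda>y1. G2 (w1, w2) \<bind>
       (\<lambda>y2. return (PX \<Otimes>\<^sub>M MY1 \<Otimes>\<^sub>M MY2) (x, y1, y2))))))"

definition is_code :: "'x measure \<Rightarrow> 'y1 measure \<Rightarrow> 'y2 measure \<Rightarrow> ('x \<Rightarrow> 'y1 \<Rightarrow> real)
    \<Rightarrow> ('x \<Rightarrow> 'y2 \<Rightarrow> real) \<Rightarrow> nat \<Rightarrow> nat \<Rightarrow> real \<Rightarrow> real \<Rightarrow> real \<Rightarrow> real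
    \<Rightarrow> ('x \<Rightarrow> nat measure) \<Rightarrow> ('x \<times> nat \<Rightarrow> nat measure) \<Rightarrow> (nat \<Rightarrow> 'y1 measure)
    \<Rightarrow> (nat \<times> nat \<Rightarrow> 'y2 measure) \<Rightarrow> bool" where
  "is_code PX MY1 MY2 dist1 dist2 M1 M2 d1 d2 eps1 eps2 E1 E2 G1 G2 \<longleftrightarrow>
     0 < M1 \<and> M1 \<le> M2 \<and>
     E1 \<in> PX \<rightarrow>\<^sub>M prob_algebra (count_space {1..M1}) \<and>
     E2 \<in> PX \<Otimes>\<^sub>M count_space {1..M1} \<rightarrow>\<^sub>M prob_algebra (count_space {1..M2 div M1}) \<and>
     G1 \<in> count_space {1..M1} \<rightarrow>\<^sub>M prob_algebra MY1 \<and>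
     G2 \<in> count_space {1..M1} \<Otimes>\<^sub>M count_space {1..M2 div M1} \<rightarrow>\<^sub>M prob_algebra MY2 \<and>
     (let L = code_law PX MY1 MY2 E1 E2 G1 G2 in
        measure L {\<omega> \<in> space L. \<not> dist1 (fst \<omega>) (fst (snd \<omega>)) \<le> d1} \<le> eps1 \<and>
        measure L {\<omega> \<in> space L. \<not> (dist1 (fst \<omega>) (fst (snd \<omega>)) \<le> d1
                                     \<and> dist2 (fst \<omega>) (snd (snd \<omega>)) \<le> d2)} \<le> eps2)"

end

theory Submission imports Defs begin

lemma sets_kernel_pa: "K \<in> M \<rightarrow>\<^sub>M prob_algebra N \<Longrightarrow> x \<in> space M \<Longrightarrow> sets (K x) = sets N"
  using measurable_space[of K M "prob_algebra N" x] by (simp add: space_prob_algebra)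

lemma prob_kernel_pa: "K \<in> M \<rightarrow>\<^sub>M prob_algebra N \<Longrightarrow> x \<in> space M \<Longrightarrow> prob_space (K x)"
  using measurable_space[of K M "prob_algebra N" x] by (simp add: space_prob_algebra)

lemma expand:
  fixes PX :: "'x measure" and MY1 :: "'y1 measure" and MY2 :: "'y2 measure"
  assumes E1[measurable]: "E1 \<in> PX \<rightarrow>\<^sub>M prob_algebra (count_space A1)"
    and E2[measurable]: "E2 \<in> PX \<Otimes>\<^sub>M count_space A1 \<rightarrow>\<^sub>M prob_algebra (count_space A2)"
    and G1[measurable]: "G1 \<in> count_space A1 \<rightarrow>\<^sub>M prob_algebra MY1"
    and G2[measurable]: "G2 \<in> count_space A1 \<Otimes>\<^sub>M count_space A2 \<rightarrow>\<^sub>M prob_algebra MY2"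
    and f[measurable]: "f \<in> borel_measurable (PX \<Otimes>\<^sub>M MY1 \<Otimes>\<^sub>M MY2)"
  shows "(\<integral>\<^sup>+\<omega>. f \<omega> \<partial>code_law PX MY1 MY2 E1 E2 G1 G2) =
    (\<integral>\<^sup>+x. \<integral>\<^sup>+w1. \<integral>\<^sup>+w2. \<integral>\<^sup>+y1. \<integral>\<^sup>+y2. f (x, y1, y2) \<partial>G2 (w1, w2) \<partial>G1 w1 \<partial>E2 (x, w1) \<partial>E1 x \<partial>PX)"
proof -
  let ?N = "PX \<Otimes>\<^sub>M MY1 \<Otimes>\<^sub>M MY2"
  have K: "(\<lambda>x. E1 x \<bind> (\<lambda>w1. E2 (x, w1) \<bind> (\<lambda>w2. G1 w1 \<bind> (\<lambda>y1. G2 (w1, w2) \<bind>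
       (\<lambda>y2. return ?N (x, y1, y2)))))) \<in> PX \<rightarrow>\<^sub>M subprob_algebra ?N"
    by (rule measurable_prob_algebraD) measurable
  show ?thesis
    unfolding code_law_def nn_integral_bind[OF f K]
  proof (intro nn_integral_cong)
    fix x assume x[measurable]: "x \<in> space PX"
    have s1: "sets (E1 x) = sets (count_space A1)" by (rule sets_kernel_pa[OF E1 x])
    have K1: "(\<lambda>w1. E2 (x, w1) \<bind> (\<lambda>w2. G1 w1 \<bind> (\<lambda>y1. G2 (w1, w2) \<bind>
       (\<lambda>y2. return ?N (x, y1, y2))))) \<in> E1 x \<rightarrow>\<^sub>M subprob_algebra ?N"
      unfolding measurable_cong_sets[OF s1 refl]
      by (rule measurable_prob_algebraD) measurable
    show "(\<integral>\<^sup>+\<omega>. f \<omega> \<partial>(E1 x \<bind> (\<lambda>w1. E2 (x, w1) \<bind> (\<lambda>w2. G1 w1 \<bind> (\<lambda>y1. G2 (w1, w2) \<bind>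
       (\<lambda>y2. return ?N (x, y1, y2))))))) =
      (\<integral>\<^sup>+w1. \<integral>\<^sup>+w2. \<integral>\<^sup>+y1. \<integral>\<^sup>+y2. f (x, y1, y2) \<partial>G2 (w1, w2) \<partial>G1 w1 \<partial>E2 (x, w1) \<partial>E1 x)"
      unfolding nn_integral_bind[OF f K1]
    proof (intro nn_integral_cong)
      fix w1 assume "w1 \<in> space (E1 x)"
      then have w1: "w1 \<in> A1" using s1 sets_eq_imp_space_eq by fastforce
      have [measurable]: "w1 \<in> space (count_space A1)" using w1 by simp
      have xw: "(x, w1) \<in> space (PX \<Otimes>\<^sub>M count_space A1)" using x w1 by (simp add: space_pair_measure)
      have s2: "sets (E2 (x, w1)) = sets (count_space A2)" by (rule sets_kernel_pa[OF E2 xw])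
      have K2: "(\<lambda>w2. G1 w1 \<bind> (\<lambda>y1. G2 (w1, w2) \<bind>
          (\<lambda>y2. return ?N (x, y1, y2)))) \<in> E2 (x, w1) \<rightarrow>\<^sub>M subprob_algebra ?N"
        unfolding measurable_cong_sets[OF s2 refl]
      proof (rule measurable_prob_algebraD, rule measurable_bind_prob_space2[OF measurable_const])
        show "G1 w1 \<in> space (prob_algebra MY1)" using measurable_space[OF G1] w1 by simp
      qed measurable
      show "(\<integral>\<^sup>+\<omega>. f \<omega> \<partial>(E2 (x, w1) \<bind> (\<lambda>w2. G1 w1 \<bind> (\<lambda>y1. G2 (w1, w2) \<bind>
          (\<lambda>y2. return ?N (x, y1, y2)))))) =
        (\<integral>\<^sup>+w2. \<integral>\<^sup>+y1. \<integral>\<^sup>+y2. f (x, y1, y2) \<partial>G2 (w1, w2) \<partial>G1 w1 \<partial>E2 (x, w1))"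
        unfolding nn_integral_bind[OF f K2]
      proof (intro nn_integral_cong)
        fix w2 assume "w2 \<in> space (E2 (x, w1))"
        then have w2: "w2 \<in> A2" using s2 sets_eq_imp_space_eq by fastforce
        have [measurable]: "w2 \<in> space (count_space A2)" using w2 by simp
        have s3: "sets (G1 w1) = sets MY1" by (rule sets_kernel_pa[OF G1]) (use w1 in simp)
        have K3: "(\<lambda>y1. G2 (w1, w2) \<bind> (\<lambda>y2. return ?N (x, y1, y2))) \<in> G1 w1 \<rightarrow>\<^sub>M subprob_algebra ?N"
          unfolding measurable_cong_sets[OF s3 refl]
          by (rule measurable_prob_algebraD) measurable
        show "(\<integral>\<^sup>+\<omega>. f \<omega> \<partial>(G1 w1 \<bind> (\<lambda>y1. G2 (w1, w2) \<bind> (\<lambda>y2. return ?N (x, y1, y2))))) =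
          (\<integral>\<^sup>+y1. \<integral>\<^sup>+y2. f (x, y1, y2) \<partial>G2 (w1, w2) \<partial>G1 w1)"
          unfolding nn_integral_bind[OF f K3]
        proof (intro nn_integral_cong)
          fix y1 assume "y1 \<in> space (G1 w1)"
          then have y1[measurable]: "y1 \<in> space MY1" using s3 sets_eq_imp_space_eq by blast
          have s4: "sets (G2 (w1, w2)) = sets MY2" by (rule sets_kernel_pa[OF G2]) (use w1 w2 in \<open>simp add: space_pair_measure\<close>)
          have K4: "(\<lambda>y2. return ?N (x, y1, y2)) \<in> G2 (w1, w2) \<rightarrow>\<^sub>M subprob_algebra ?N"
            unfolding measurable_cong_sets[OF s4 refl] by measurable
          show "(\<integral>\<^sup>+\<omega>. f \<omega> \<partial>(G2 (w1, w2) \<bind> (\<lambda>y2. return ?N (x, y1, y2)))) =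
            (\<integral>\<^sup>+y2. f (x, y1, y2) \<partial>G2 (w1, w2))"
            unfolding nn_integral_bind[OF f K4]
          proof (intro nn_integral_cong)
            fix y2 assume "y2 \<in> space (G2 (w1, w2))"
            then have y2: "y2 \<in> space MY2" using s4 sets_eq_imp_space_eq by blast
            show "(\<integral>\<^sup>+\<omega>. f \<omega> \<partial>return ?N (x, y1, y2)) = f (x, y1, y2)"
              by (rule nn_integral_return) (use x y1 y2 in \<open>auto simp: space_pair_measure\<close>)
          qed
        qed
      qed
    qed
  qed
qed
lemma swap3:
  fixes PX :: "'x measure" and MY1 :: "'y1 measure" and MY2 :: "'y2 measure"
  assumes PX: "prob_space PX" and A: "prob_space A" and B: "prob_space B"
    and sA: "sets A = sets MY1" and sB: "sets B = sets MY2"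
    and f[measurable]: "f \<in> borel_measurable (PX \<Otimes>\<^sub>M MY1 \<Otimes>\<^sub>M MY2)"
  shows "(\<integral>\<^sup>+x. \<integral>\<^sup>+y1. \<integral>\<^sup>+y2. f (x, y1, y2) \<partial>B \<partial>A \<partial>PX)
       = (\<integral>\<^sup>+y1. \<integral>\<^sup>+y2. \<integral>\<^sup>+x. f (x, y1, y2) \<partial>PX \<partial>B \<partial>A)"
proof -
  interpret PA: pair_sigma_finite PX A
    by (intro pair_sigma_finite.intro prob_space_imp_sigma_finite PX A)
  interpret PB: pair_sigma_finite PX B
    by (intro pair_sigma_finite.intro prob_space_imp_sigma_finite PX B)
  have s1: "sets ((PX \<Otimes>\<^sub>M A) \<Otimes>\<^sub>M B) = sets ((PX \<Otimes>\<^sub>M MY1) \<Otimes>\<^sub>M MY2)"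
    by (intro sets_pair_measure_cong sA sB refl)
  have m0: "(\<lambda>z. f (fst (fst z), snd (fst z), snd z)) \<in> borel_measurable ((PX \<Otimes>\<^sub>M A) \<Otimes>\<^sub>M B)"
    unfolding measurable_cong_sets[OF s1 refl] by measurable
  have m1: "(\<lambda>((x, y1), y2). f (x, y1, y2)) \<in> borel_measurable ((PX \<Otimes>\<^sub>M A) \<Otimes>\<^sub>M B)"
    using m0 by (simp add: case_prod_beta')
  have m2: "(\<lambda>(x, y1). \<integral>\<^sup>+y2. f (x, y1, y2) \<partial>B) \<in> borel_measurable (PX \<Otimes>\<^sub>M A)"
    using PB.M2.borel_measurable_nn_integral_fst[OF m1] by (simp add: case_prod_beta')
  have "(\<integral>\<^sup>+x. \<integral>\<^sup>+y1. \<integral>\<^sup>+y2. f (x, y1, y2) \<partial>B \<partial>A \<partial>PX)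
      = (\<integral>\<^sup>+y1. \<integral>\<^sup>+x. \<integral>\<^sup>+y2. f (x, y1, y2) \<partial>B \<partial>PX \<partial>A)"
    using PA.Fubini'[OF m2] by simp
  also have "\<dots> = (\<integral>\<^sup>+y1. \<integral>\<^sup>+y2. \<integral>\<^sup>+x. f (x, y1, y2) \<partial>PX \<partial>B \<partial>A)"
  proof (intro nn_integral_cong)
    fix y1 assume "y1 \<in> space A"
    then have y1[measurable]: "y1 \<in> space MY1" using sets_eq_imp_space_eq[OF sA] by simp
    have s2: "sets (PX \<Otimes>\<^sub>M B) = sets (PX \<Otimes>\<^sub>M MY2)"
      by (intro sets_pair_measure_cong sB refl)
    have m3: "(\<lambda>(x, y2). f (x, y1, y2)) \<in> borel_measurable (PX \<Otimes>\<^sub>M B)"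
      unfolding measurable_cong_sets[OF s2 refl] by measurable
    show "(\<integral>\<^sup>+x. \<integral>\<^sup>+y2. f (x, y1, y2) \<partial>B \<partial>PX) = (\<integral>\<^sup>+y2. \<integral>\<^sup>+x. f (x, y1, y2) \<partial>PX \<partial>B)"
      using PB.Fubini'[OF m3] by simp
  qed
  finally show ?thesis .
qed

lemma meas3:
  fixes PX :: "'x measure" and MY1 :: "'y1 measure" and MY2 :: "'y2 measure"
  assumes PX: "prob_space PX" and A: "prob_space A" and B: "prob_space B"
    and sA: "sets A = sets MY1" and sB: "sets B = sets MY2"
    and f[measurable]: "f \<in> borel_measurable (PX \<Otimes>\<^sub>M MY1 \<Otimes>\<^sub>M MY2)"
  shows "(\<lambda>x. \<integral>\<^sup>+y1. \<integral>\<^sup>+y2. f (x, y1, y2) \<partial>B \<partial>A) \<in> borel_measurable PX"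
proof -
  interpret PA: pair_sigma_finite PX A
    by (intro pair_sigma_finite.intro prob_space_imp_sigma_finite PX A)
  interpret PB: pair_sigma_finite PX B
    by (intro pair_sigma_finite.intro prob_space_imp_sigma_finite PX B)
  have s1: "sets ((PX \<Otimes>\<^sub>M A) \<Otimes>\<^sub>M B) = sets ((PX \<Otimes>\<^sub>M MY1) \<Otimes>\<^sub>M MY2)"
    by (intro sets_pair_measure_cong sA sB refl)
  have m0: "(\<lambda>z. f (fst (fst z), snd (fst z), snd z)) \<in> borel_measurable ((PX \<Otimes>\<^sub>M A) \<Otimes>\<^sub>M B)"
    unfolding measurable_cong_sets[OF s1 refl] by measurable
  have m1: "(\<lambda>((x, y1), y2). f (x, y1, y2)) \<in> borel_measurable ((PX \<Otimes>\<^sub>M A) \<Otimes>\<^sub>M B)"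
    using m0 by (simp add: case_prod_beta')
  have m2: "(\<lambda>(x, y1). \<integral>\<^sup>+y2. f (x, y1, y2) \<partial>B) \<in> borel_measurable (PX \<Otimes>\<^sub>M A)"
    using PB.M2.borel_measurable_nn_integral_fst[OF m1] by (simp add: case_prod_beta')
  show ?thesis using PA.M2.borel_measurable_nn_integral_fst[OF m2] by simp
qed

lemma swap2:
  fixes PX :: "'x measure" and MY1 :: "'y1 measure"
  assumes PX: "prob_space PX" and A: "prob_space A" and sA: "sets A = sets MY1"
    and f[measurable]: "f \<in> borel_measurable (PX \<Otimes>\<^sub>M MY1)"
  shows "(\<integral>\<^sup>+x. \<integral>\<^sup>+y1. f (x, y1) \<partial>A \<partial>PX) = (\<integral>\<^sup>+y1. \<integral>\<^sup>+x. f (x, y1) \<partial>PX \<partial>A)"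
    and "(\<lambda>x. \<integral>\<^sup>+y1. f (x, y1) \<partial>A) \<in> borel_measurable PX"
proof -
  interpret PA: pair_sigma_finite PX A
    by (intro pair_sigma_finite.intro prob_space_imp_sigma_finite PX A)
  have s1: "sets (PX \<Otimes>\<^sub>M A) = sets (PX \<Otimes>\<^sub>M MY1)"
    by (intro sets_pair_measure_cong sA refl)
  have m: "f \<in> borel_measurable (PX \<Otimes>\<^sub>M A)"
    unfolding measurable_cong_sets[OF s1 refl] by measurable
  show "(\<integral>\<^sup>+x. \<integral>\<^sup>+y1. f (x, y1) \<partial>A \<partial>PX) = (\<integral>\<^sup>+y1. \<integral>\<^sup>+x. f (x, y1) \<partial>PX \<partial>A)"
    using PA.Fubini[OF m] by simp
  show "(\<lambda>x. \<integral>\<^sup>+y1. f (x, y1) \<partial>A) \<in> borel_measurable PX"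
    using PA.M2.borel_measurable_nn_integral_fst[OF m] .
qed

lemma int_le_sum:
  assumes P: "prob_space M" and s: "sets M = sets (count_space A)" and fin: "finite A"
  shows "(\<integral>\<^sup>+w. g w \<partial>M) \<le> (\<Sum>v\<in>A. g v)"
proof -
  have sp: "space M = A" using sets_eq_imp_space_eq[OF s] by simp
  have "(\<integral>\<^sup>+w. g w \<partial>M) = (\<integral>\<^sup>+w. (\<Sum>v\<in>A. g v * indicator {v} w) \<partial>M)"
  proof (intro nn_integral_cong)
    fix w assume "w \<in> space M"
    then have w: "w \<in> A" using sp by simp
    have "(\<Sum>v\<in>A. g v * indicator {v} w) = (\<Sum>v\<in>A. if v = w then g v else 0)"
      by (intro sum.cong) (auto simp: indicator_def)
    also have "\<dots> = g w" using w fin by (simp add: sum.delta')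
    finally show "g w = (\<Sum>v\<in>A. g v * indicator {v} w)" by simp
  qed
  also have "\<dots> = (\<Sum>v\<in>A. g v * emeasure M {v})"
  proof (subst nn_integral_sum)
    fix v assume "v \<in> A"
    then have "{v} \<in> sets M" using s by simp
    then show "(\<lambda>w. g v * indicator {v} w) \<in> borel_measurable M" by simp
  next
    show "(\<Sum>v\<in>A. integral\<^sup>N M (\<lambda>w. g v * indicator {v} w)) = (\<Sum>v\<in>A. g v * emeasure M {v})"
      by (intro sum.cong refl nn_integral_cmult_indicator) (use s in simp)
  qed
  also have "\<dots> \<le> (\<Sum>v\<in>A. g v)"
  proof (intro sum_mono)
    fix v
    have "g v * emeasure M {v} \<le> g v * 1"
      by (intro mult_left_mono prob_space.emeasure_le_1[OF P]) simp
    then show "g v * emeasure M {v} \<le> g v" by simp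
  qed
  finally show ?thesis .
qed
lemma bound2:
  fixes PX :: "'x measure" and MY1 :: "'y1 measure" and MY2 :: "'y2 measure"
  assumes PX: "prob_space PX"
    and E1[measurable]: "E1 \<in> PX \<rightarrow>\<^sub>M prob_algebra (count_space A1)"
    and E2[measurable]: "E2 \<in> PX \<Otimes>\<^sub>M count_space A1 \<rightarrow>\<^sub>M prob_algebra (count_space A2)"
    and G1[measurable]: "G1 \<in> count_space A1 \<rightarrow>\<^sub>M prob_algebra MY1"
    and G2[measurable]: "G2 \<in> count_space A1 \<Otimes>\<^sub>M count_space A2 \<rightarrow>\<^sub>M prob_algebra MY2"
    and fin: "finite A1" "finite A2"
    and f[measurable]: "f \<in> borel_measurable (PX \<Otimes>\<^sub>M MY1 \<Otimes>\<^sub>M MY2)"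
    and le1: "\<And>y1 y2. y1 \<in> space MY1 \<Longrightarrow> y2 \<in> space MY2 \<Longrightarrow> (\<integral>\<^sup>+x. f (x, y1, y2) \<partial>PX) \<le> 1"
  shows "(\<integral>\<^sup>+\<omega>. f \<omega> \<partial>code_law PX MY1 MY2 E1 E2 G1 G2) \<le> of_nat (card A1 * card A2)"
proof -
  define \<Phi> where "\<Phi> = (\<lambda>x w1 w2. \<integral>\<^sup>+y1. \<integral>\<^sup>+y2. f (x, y1, y2) \<partial>G2 (w1, w2) \<partial>G1 w1)"
  have G1p: "w1 \<in> A1 \<Longrightarrow> prob_space (G1 w1) \<and> sets (G1 w1) = sets MY1" for w1
    using measurable_space[OF G1, of w1] by (simp add: space_prob_algebra)
  have G2p: "w1 \<in> A1 \<Longrightarrow> w2 \<in> A2 \<Longrightarrow> prob_space (G2 (w1, w2)) \<and> sets (G2 (w1, w2)) = sets MY2" for w1 w2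
    using measurable_space[OF G2, of "(w1, w2)"] by (simp add: space_prob_algebra space_pair_measure)
  have "(\<integral>\<^sup>+\<omega>. f \<omega> \<partial>code_law PX MY1 MY2 E1 E2 G1 G2) =
    (\<integral>\<^sup>+x. \<integral>\<^sup>+w1. \<integral>\<^sup>+w2. \<Phi> x w1 w2 \<partial>E2 (x, w1) \<partial>E1 x \<partial>PX)"
    unfolding \<Phi>_def by (rule expand[OF E1 E2 G1 G2 f])
  also have "\<dots> \<le> (\<integral>\<^sup>+x. (\<Sum>w1\<in>A1. \<Sum>w2\<in>A2. \<Phi> x w1 w2) \<partial>PX)"
  proof (intro nn_integral_mono)
    fix x assume x: "x \<in> space PX"
    have e1: "prob_space (E1 x) \<and> sets (E1 x) = sets (count_space A1)"
      using measurable_space[OF E1 x] by (simp add: space_prob_algebra)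
    have "(\<integral>\<^sup>+w1. \<integral>\<^sup>+w2. \<Phi> x w1 w2 \<partial>E2 (x, w1) \<partial>E1 x) \<le> (\<integral>\<^sup>+w1. (\<Sum>w2\<in>A2. \<Phi> x w1 w2) \<partial>E1 x)"
    proof (intro nn_integral_mono)
      fix w1 assume "w1 \<in> space (E1 x)"
      then have w1: "w1 \<in> A1" using sets_eq_imp_space_eq[of "E1 x" "count_space A1"] e1 by simp
      have e2: "prob_space (E2 (x, w1)) \<and> sets (E2 (x, w1)) = sets (count_space A2)"
        using measurable_space[OF E2, of "(x, w1)"] x w1 by (simp add: space_prob_algebra space_pair_measure)
      show "(\<integral>\<^sup>+w2. \<Phi> x w1 w2 \<partial>E2 (x, w1)) \<le> (\<Sum>w2\<in>A2. \<Phi> x w1 w2)"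
        using int_le_sum[of "E2 (x, w1)" A2] e2 fin by blast
    qed
    also have "\<dots> \<le> (\<Sum>w1\<in>A1. \<Sum>w2\<in>A2. \<Phi> x w1 w2)"
      using int_le_sum[of "E1 x" A1] e1 fin by blast
    finally show "(\<integral>\<^sup>+w1. \<integral>\<^sup>+w2. \<Phi> x w1 w2 \<partial>E2 (x, w1) \<partial>E1 x) \<le> (\<Sum>w1\<in>A1. \<Sum>w2\<in>A2. \<Phi> x w1 w2)" .
  qed
  also have "\<dots> = (\<Sum>w1\<in>A1. \<Sum>w2\<in>A2. \<integral>\<^sup>+x. \<Phi> x w1 w2 \<partial>PX)"
  proof -
    have m: "w1 \<in> A1 \<Longrightarrow> w2 \<in> A2 \<Longrightarrow> (\<lambda>x. \<Phi> x w1 w2) \<in> borel_measurable PX" for w1 w2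
      unfolding \<Phi>_def using G1p G2p by (intro meas3[OF PX _ _ _ _ f]) auto
    show ?thesis
      by (subst nn_integral_sum) (auto intro!: sum.cong nn_integral_sum borel_measurable_sum m)
  qed
  also have "\<dots> \<le> (\<Sum>w1\<in>A1. \<Sum>w2\<in>A2. 1)"
  proof (intro sum_mono)
    fix w1 w2 assume w1: "w1 \<in> A1" and w2: "w2 \<in> A2"
    have "(\<integral>\<^sup>+x. \<Phi> x w1 w2 \<partial>PX) = (\<integral>\<^sup>+y1. \<integral>\<^sup>+y2. \<integral>\<^sup>+x. f (x, y1, y2) \<partial>PX \<partial>G2 (w1, w2) \<partial>G1 w1)"
      unfolding \<Phi>_def using G1p[OF w1] G2p[OF w1 w2] by (intro swap3[OF PX _ _ _ _ f]) auto
    also have "\<dots> \<le> (\<integral>\<^sup>+y1. \<integral>\<^sup>+y2. 1 \<partial>G2 (w1, w2) \<partial>G1 w1)"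
    proof (intro nn_integral_mono)
      fix y1 y2 assume "y1 \<in> space (G1 w1)" "y2 \<in> space (G2 (w1, w2))"
      then show "(\<integral>\<^sup>+x. f (x, y1, y2) \<partial>PX) \<le> 1"
        using G1p[OF w1] G2p[OF w1 w2] sets_eq_imp_space_eq le1 by metis
    qed
    also have "\<dots> = 1"
      using G1p[OF w1] G2p[OF w1 w2] by (simp add: prob_space.emeasure_space_1)
    finally show "(\<integral>\<^sup>+x. \<Phi> x w1 w2 \<partial>PX) \<le> 1" .
  qed
  also have "\<dots> = of_nat (card A1 * card A2)" by simp
  finally show ?thesis .
qed
lemma bound1:
  fixes PX :: "'x measure" and MY1 :: "'y1 measure" and MY2 :: "'y2 measure"
  assumes PX: "prob_space PX"
    and E1[measurable]: "E1 \<in> PX \<rightarrow>\<^sub>M prob_algebra (count_space A1)"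
    and E2[measurable]: "E2 \<in> PX \<Otimes>\<^sub>M count_space A1 \<rightarrow>\<^sub>M prob_algebra (count_space A2)"
    and G1[measurable]: "G1 \<in> count_space A1 \<rightarrow>\<^sub>M prob_algebra MY1"
    and G2[measurable]: "G2 \<in> count_space A1 \<Otimes>\<^sub>M count_space A2 \<rightarrow>\<^sub>M prob_algebra MY2"
    and fin: "finite A1"
    and g[measurable]: "g \<in> borel_measurable (PX \<Otimes>\<^sub>M MY1)"
    and le1: "\<And>y1. y1 \<in> space MY1 \<Longrightarrow> (\<integral>\<^sup>+x. g (x, y1) \<partial>PX) \<le> 1"
  shows "(\<integral>\<^sup>+\<omega>. g (fst \<omega>, fst (snd \<omega>)) \<partial>code_law PX MY1 MY2 E1 E2 G1 G2) \<le> of_nat (card A1)"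
proof -
  define \<Psi> where "\<Psi> = (\<lambda>x w1. \<integral>\<^sup>+y1. g (x, y1) \<partial>G1 w1)"
  have G1p: "w1 \<in> A1 \<Longrightarrow> prob_space (G1 w1) \<and> sets (G1 w1) = sets MY1" for w1
    using measurable_space[OF G1, of w1] by (simp add: space_prob_algebra)
  have G2p: "w1 \<in> A1 \<Longrightarrow> w2 \<in> A2 \<Longrightarrow> prob_space (G2 (w1, w2)) \<and> sets (G2 (w1, w2)) = sets MY2" for w1 w2
    using measurable_space[OF G2, of "(w1, w2)"] by (simp add: space_prob_algebra space_pair_measure)
  have fm: "(\<lambda>\<omega>. g (fst \<omega>, fst (snd \<omega>))) \<in> borel_measurable (PX \<Otimes>\<^sub>M MY1 \<Otimes>\<^sub>M MY2)" by measurable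
  have "(\<integral>\<^sup>+\<omega>. g (fst \<omega>, fst (snd \<omega>)) \<partial>code_law PX MY1 MY2 E1 E2 G1 G2) =
    (\<integral>\<^sup>+x. \<integral>\<^sup>+w1. \<integral>\<^sup>+w2. \<integral>\<^sup>+y1. \<integral>\<^sup>+y2. g (x, y1) \<partial>G2 (w1, w2) \<partial>G1 w1 \<partial>E2 (x, w1) \<partial>E1 x \<partial>PX)"
    using expand[OF E1 E2 G1 G2 fm] by simp
  also have "\<dots> = (\<integral>\<^sup>+x. \<integral>\<^sup>+w1. \<Psi> x w1 \<partial>E1 x \<partial>PX)"
  proof (intro nn_integral_cong)
    fix x w1 assume x: "x \<in> space PX" and "w1 \<in> space (E1 x)"
    have e1: "prob_space (E1 x) \<and> sets (E1 x) = sets (count_space A1)"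
      using measurable_space[OF E1 x] by (simp add: space_prob_algebra)
    then have w1: "w1 \<in> A1" using \<open>w1 \<in> space (E1 x)\<close> sets_eq_imp_space_eq[of "E1 x" "count_space A1"] by simp
    have e2: "prob_space (E2 (x, w1)) \<and> sets (E2 (x, w1)) = sets (count_space A2)"
      using measurable_space[OF E2, of "(x, w1)"] x w1 by (simp add: space_prob_algebra space_pair_measure)
    have "(\<integral>\<^sup>+w2. \<integral>\<^sup>+y1. \<integral>\<^sup>+y2. g (x, y1) \<partial>G2 (w1, w2) \<partial>G1 w1 \<partial>E2 (x, w1)) =
          (\<integral>\<^sup>+w2. \<Psi> x w1 \<partial>E2 (x, w1))"
      unfolding \<Psi>_def
    proof (intro nn_integral_cong)
      fix w2 y1 assume "w2 \<in> space (E2 (x, w1))"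
      then have w2: "w2 \<in> A2" using e2 sets_eq_imp_space_eq[of "E2 (x, w1)" "count_space A2"] by simp
      show "(\<integral>\<^sup>+y2. g (x, y1) \<partial>G2 (w1, w2)) = g (x, y1)"
        using G2p[OF w1 w2] by (simp add: prob_space.emeasure_space_1)
    qed
    also have "\<dots> = \<Psi> x w1" using e2 by (simp add: prob_space.emeasure_space_1)
    finally show "(\<integral>\<^sup>+w2. \<integral>\<^sup>+y1. \<integral>\<^sup>+y2. g (x, y1) \<partial>G2 (w1, w2) \<partial>G1 w1 \<partial>E2 (x, w1)) = \<Psi> x w1" .
  qed
  also have "\<dots> \<le> (\<integral>\<^sup>+x. (\<Sum>w1\<in>A1. \<Psi> x w1) \<partial>PX)"
  proof (intro nn_integral_mono)
    fix x assume x: "x \<in> space PX"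
    have e1: "prob_space (E1 x) \<and> sets (E1 x) = sets (count_space A1)"
      using measurable_space[OF E1 x] by (simp add: space_prob_algebra)
    then show "(\<integral>\<^sup>+w1. \<Psi> x w1 \<partial>E1 x) \<le> (\<Sum>w1\<in>A1. \<Psi> x w1)"
      using int_le_sum[of "E1 x" A1] fin by blast
  qed
  also have "\<dots> = (\<Sum>w1\<in>A1. \<integral>\<^sup>+x. \<Psi> x w1 \<partial>PX)"
  proof -
    have m: "w1 \<in> A1 \<Longrightarrow> (\<lambda>x. \<Psi> x w1) \<in> borel_measurable PX" for w1
      unfolding \<Psi>_def using G1p by (intro swap2(2)[OF PX _ _ g]) auto
    show ?thesis by (rule nn_integral_sum) (rule m)
  qed
  also have "\<dots> \<le> (\<Sum>w1\<in>A1. 1)"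
  proof (intro sum_mono)
    fix w1 assume w1: "w1 \<in> A1"
    have "(\<integral>\<^sup>+x. \<Psi> x w1 \<partial>PX) = (\<integral>\<^sup>+y1. \<integral>\<^sup>+x. g (x, y1) \<partial>PX \<partial>G1 w1)"
      unfolding \<Psi>_def using G1p[OF w1] by (intro swap2(1)[OF PX _ _ g]) auto
    also have "\<dots> \<le> (\<integral>\<^sup>+y1. 1 \<partial>G1 w1)"
    proof (intro nn_integral_mono)
      fix y1 assume "y1 \<in> space (G1 w1)"
      then show "(\<integral>\<^sup>+x. g (x, y1) \<partial>PX) \<le> 1"
        using G1p[OF w1] sets_eq_imp_space_eq le1 by metis
    qed
    also have "\<dots> = 1"
      using G1p[OF w1] by (simp add: prob_space.emeasure_space_1)
    finally show "(\<integral>\<^sup>+x. \<Psi> x w1 \<partial>PX) \<le> 1" .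
  qed
  also have "\<dots> = of_nat (card A1)" by simp
  finally show ?thesis .
qed
lemma arith2:
  fixes nu q lam2 a b d1 d2 D1 D2 lM1 lM2 g1 g2 :: real
  assumes "0 \<le> nu" "0 \<le> q" "0 \<le> lam2" "D1 \<le> d1" "D2 \<le> d2"
    and F: "(1+nu)*(-a) - ((1+nu)*q)*d1 - lam2*d2 - nu*lM1 \<ge> lM2 + nu*g1 + g2"
    and F1: "(1/(1+nu)*b - a) - q*d1 < lM1 + g1"
  shows "-q*D1 - lam2*D2 - a - (nu/(1+nu))*b \<ge> lM2 + g2"
proof -
  have "nu*((1/(1+nu)*b - a) - q*d1) \<le> nu*(lM1+g1)"
    using F1 assms(1) by (intro mult_left_mono) auto
  moreover have "nu/(1+nu)*b = nu*(1/(1+nu)*b)" by simp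
  moreover have "q*D1 \<le> q*d1" using assms by (intro mult_left_mono) auto
  moreover have "lam2*D2 \<le> lam2*d2" using assms by (intro mult_left_mono) auto
  ultimately show ?thesis using F by (simp add: algebra_simps)
qed

lemma fm_subadd:
  assumes "prob_space L" "A \<in> sets L" "B \<in> sets L"
  shows "measure L (A \<union> B) \<le> measure L A + measure L B"
  using assms by (intro measure_subadditive) (auto simp: finite_measure.emeasure_finite prob_space.finite_measure)

lemma markov_helper:
  assumes P: "prob_space L" and T: "T \<in> sets L" and c: "0 < c"
    and kc: "\<And>\<omega>. \<omega> \<in> T \<Longrightarrow> c \<le> kv \<omega>"
    and km: "(\<lambda>\<omega>. ennreal (kv \<omega>)) \<in> borel_measurable L"
    and ki: "(\<integral>\<^sup>+\<omega>. ennreal (kv \<omega>) \<partial>L) \<le> of_nat m"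
  shows "measure L T \<le> real m / c"
proof -
  interpret prob_space L by (rule P)
  have "emeasure L T = (\<integral>\<^sup>+\<omega>. indicator T \<omega> \<partial>L)" using T by simp
  also have "\<dots> \<le> (\<integral>\<^sup>+\<omega>. ennreal (kv \<omega>) * ennreal (1 / c) \<partial>L)"
  proof (intro nn_integral_mono)
    fix \<omega> show "indicator T \<omega> \<le> ennreal (kv \<omega>) * ennreal (1 / c)"
    proof (cases "\<omega> \<in> T")
      case True
      then have k: "c \<le> kv \<omega>" by (rule kc)
      then have "1 \<le> kv \<omega> / c" using c by simp
      then have "ennreal 1 \<le> ennreal (kv \<omega> / c)" by (rule ennreal_leI)
      also have "ennreal (kv \<omega> / c) = ennreal (kv \<omega>) * ennreal (1 / c)"
        using k c by (simp add: ennreal_mult[symmetric] divide_inverse)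
      finally show ?thesis using True by simp
    qed simp
  qed
  also have "\<dots> = (\<integral>\<^sup>+\<omega>. ennreal (kv \<omega>) \<partial>L) * ennreal (1 / c)"
    by (rule nn_integral_multc[OF km])
  also have "\<dots> \<le> of_nat m * ennreal (1 / c)"
    by (intro mult_right_mono ki) simp
  also have "\<dots> = ennreal (real m / c)"
    using c by (simp add: ennreal_mult[symmetric] ennreal_of_nat_eq_real_of_nat divide_inverse)
  finally have "ennreal (measure L T) \<le> ennreal (real m / c)"
    by (simp add: emeasure_eq_measure)
  then show ?thesis using c by (simp add: ennreal_le_iff2) (smt (verit, ccfv_SIG) divide_nonneg_pos ennreal_le_iff of_nat_0_le_iff)
qed
theorem corollary2:
  fixes PX :: "'x measure" and MY1 :: "'y1 measure" and MY2 :: "'y2 measure"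
    and dist1 :: "'x \<Rightarrow> 'y1 \<Rightarrow> real" and dist2 :: "'x \<Rightarrow> 'y2 \<Rightarrow> real"
    and beta1 :: "'x \<Rightarrow> real" and beta2 :: "'x \<Rightarrow> 'y1 \<Rightarrow> real"
    and nu1 lam1 lam2 d1 d2 eps1 eps2 gamma1 gamma2 :: real
    and M1 M2 :: nat
    and E1 :: "'x \<Rightarrow> nat measure" and E2 :: "'x \<times> nat \<Rightarrow> nat measure"
    and G1 :: "nat \<Rightarrow> 'y1 measure" and G2 :: "nat \<times> nat \<Rightarrow> 'y2 measure"
  assumes PX: "prob_space PX"
    and sing_X: "\<And>x. x \<in> space PX \<Longrightarrow> {x} \<in> sets PX"
    and sing_Y1: "\<And>y. y \<in> space MY1 \<Longrightarrow> {y} \<in> sets MY1"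
    and sing_Y2: "\<And>y. y \<in> space MY2 \<Longrightarrow> {y} \<in> sets MY2"
    and dist1_meas: "(\<lambda>(x, y). dist1 x y) \<in> borel_measurable (PX \<Otimes>\<^sub>M MY1)"
    and dist2_meas: "(\<lambda>(x, y). dist2 x y) \<in> borel_measurable (PX \<Otimes>\<^sub>M MY2)"
    and dist1_nonneg: "\<And>x y. x \<in> space PX \<Longrightarrow> y \<in> space MY1 \<Longrightarrow> 0 \<le> dist1 x y"
    and dist2_nonneg: "\<And>x y. x \<in> space PX \<Longrightarrow> y \<in> space MY2 \<Longrightarrow> 0 \<le> dist2 x y"
    and nu1: "0 \<le> nu1" and lam1: "0 \<le> lam1" and lam2: "0 \<le> lam2"
    and beta1_meas: "beta1 \<in> borel_measurable PX"
    and beta1_pos: "\<And>x. x \<in> space PX \<Longrightarrow> 0 < beta1 x"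
    and beta2_meas: "(\<lambda>(x, y). beta2 x y) \<in> borel_measurable (PX \<Otimes>\<^sub>M MY1)"
    and beta2_pos: "\<And>x y. x \<in> space PX \<Longrightarrow> y \<in> space MY1 \<Longrightarrow> 0 < beta2 x y"
    and Sigma2_le: "\<And>y1 y2. y1 \<in> space MY1 \<Longrightarrow> y2 \<in> space MY2 \<Longrightarrow>
                      Sigma2 PX dist1 dist2 beta1 beta2 nu1 lam1 lam2 y1 y2 \<le> 1"
    and Sigma1_le: "\<And>y1. y1 \<in> space MY1 \<Longrightarrow> Sigma1 PX dist1 beta1 beta2 nu1 lam1 y1 \<le> 1"
    and code: "is_code PX MY1 MY2 dist1 dist2 M1 M2 d1 d2 eps1 eps2 E1 E2 G1 G2"
    and gamma1: "0 < gamma1" and gamma2: "0 < gamma2"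
  defines "L \<equiv> code_law PX MY1 MY2 E1 E2 G1 G2"
    and "F1 \<equiv> (\<lambda>x y1. ln (beta2 x y1 powr (1 / (1 + nu1)) / beta1 x) - lam1 / (1 + nu1) * d1)"
    and "F \<equiv> (\<lambda>x. (1 + nu1) * ln (1 / beta1 x) - lam1 * d1 - lam2 * d2 - nu1 * ln (real M1))"
  shows "(eps1 \<ge> measure L {\<omega> \<in> space L. F1 (fst \<omega>) (fst (snd \<omega>)) \<ge> ln (real M1) + gamma1}
                  - exp (- gamma1)) \<and>
         (eps2 \<ge> measure L {\<omega> \<in> space L.
                   F (fst \<omega>) \<ge> ln (real M2) + nu1 * gamma1 + gamma2
                   \<or> F1 (fst \<omega>) (fst (snd \<omega>)) \<ge> ln (real M1) + gamma1}
                  - exp (- gamma1) - exp (- gamma2))"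
proof -
  have M1pos: "0 < M1" and M12: "M1 \<le> M2"
    and E1[measurable]: "E1 \<in> PX \<rightarrow>\<^sub>M prob_algebra (count_space {1..M1})"
    and E2[measurable]: "E2 \<in> PX \<Otimes>\<^sub>M count_space {1..M1} \<rightarrow>\<^sub>M prob_algebra (count_space {1..M2 div M1})"
    and G1[measurable]: "G1 \<in> count_space {1..M1} \<rightarrow>\<^sub>M prob_algebra MY1"
    and G2[measurable]: "G2 \<in> count_space {1..M1} \<Otimes>\<^sub>M count_space {1..M2 div M1} \<rightarrow>\<^sub>M prob_algebra MY2"
    and eps1: "measure L {\<omega> \<in> space L. \<not> dist1 (fst \<omega>) (fst (snd \<omega>)) \<le> d1} \<le> eps1"
    and eps2: "measure L {\<omega> \<in> space L. \<not> (dist1 (fst \<omega>) (fst (snd \<omega>)) \<le> d1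
                                     \<and> dist2 (fst \<omega>) (snd (snd \<omega>)) \<le> d2)} \<le> eps2"
    using code unfolding is_code_def L_def Let_def by auto
  let ?N = "PX \<Otimes>\<^sub>M MY1 \<Otimes>\<^sub>M MY2"
  have K: "(\<lambda>x. E1 x \<bind> (\<lambda>w1. E2 (x, w1) \<bind> (\<lambda>w2. G1 w1 \<bind> (\<lambda>y1. G2 (w1, w2) \<bind>
       (\<lambda>y2. return ?N (x, y1, y2)))))) \<in> PX \<rightarrow>\<^sub>M prob_algebra ?N"
    by measurable
  have PXa: "PX \<in> space (prob_algebra PX)" using PX by (simp add: space_prob_algebra)
  have PL: "prob_space L" unfolding L_def code_law_def by (rule prob_space_bind'[OF PXa K])
  have sL: "sets L = sets ?N" unfolding L_def code_law_def by (rule sets_bind'[OF PXa K])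
  have spL: "space L = space ?N" using sets_eq_imp_space_eq[OF sL] .
  interpret L: prob_space L by (rule PL)

  have d1m[measurable]: "(\<lambda>z. dist1 (fst z) (snd z)) \<in> borel_measurable (PX \<Otimes>\<^sub>M MY1)"
    using dist1_meas by (simp add: case_prod_beta')
  have b2m[measurable]: "(\<lambda>z. beta2 (fst z) (snd z)) \<in> borel_measurable (PX \<Otimes>\<^sub>M MY1)"
    using beta2_meas by (simp add: case_prod_beta')
  have d2m: "(\<lambda>z. dist2 (fst z) (snd z)) \<in> borel_measurable (PX \<Otimes>\<^sub>M MY2)"
    using dist2_meas by (simp add: case_prod_beta')
  have D1N[measurable]: "(\<lambda>\<omega>. dist1 (fst \<omega>) (fst (snd \<omega>))) \<in> borel_measurable ?N"
    using measurable_compose[of "\<lambda>\<omega>. (fst \<omega>, fst (snd \<omega>))" ?N "PX \<Otimes>\<^sub>M MY1", OF _ d1m] by simp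
  have B2N[measurable]: "(\<lambda>\<omega>. beta2 (fst \<omega>) (fst (snd \<omega>))) \<in> borel_measurable ?N"
    using measurable_compose[of "\<lambda>\<omega>. (fst \<omega>, fst (snd \<omega>))" ?N "PX \<Otimes>\<^sub>M MY1", OF _ b2m] by simp
  have D2N[measurable]: "(\<lambda>\<omega>. dist2 (fst \<omega>) (snd (snd \<omega>))) \<in> borel_measurable ?N"
    using measurable_compose[of "\<lambda>\<omega>. (fst \<omega>, snd (snd \<omega>))" ?N "PX \<Otimes>\<^sub>M MY2", OF _ d2m] by simp
  note [measurable] = beta1_meas

  define k1v where "k1v = (\<lambda>x y1. exp (- (lam1 / (1 + nu1)) * dist1 x y1) * beta2 x y1 powr (1 / (1 + nu1)) / beta1 x)"
  define k2v where "k2v = (\<lambda>x y1 y2. exp (- (lam1 / (1 + nu1)) * dist1 x y1 - lam2 * dist2 x y2)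
         / (beta1 x * beta2 x y1 powr (nu1 / (1 + nu1))))"
  have mk1: "(\<lambda>z. ennreal (k1v (fst z) (snd z))) \<in> borel_measurable (PX \<Otimes>\<^sub>M MY1)"
    unfolding k1v_def by measurable
  have mk2: "(\<lambda>\<omega>. ennreal (k2v (fst \<omega>) (fst (snd \<omega>)) (snd (snd \<omega>)))) \<in> borel_measurable ?N"
    unfolding k2v_def by measurable
  have mk1N: "(\<lambda>\<omega>. ennreal (k1v (fst \<omega>) (fst (snd \<omega>)))) \<in> borel_measurable ?N"
    unfolding k1v_def by measurable

  have int1: "(\<integral>\<^sup>+\<omega>. ennreal (k1v (fst \<omega>) (fst (snd \<omega>))) \<partial>L) \<le> of_nat M1"
  proof -
    have "(\<integral>\<^sup>+\<omega>. (\<lambda>z. ennreal (k1v (fst z) (snd z))) (fst \<omega>, fst (snd \<omega>)) \<partial>L) \<le> of_nat (card {1..M1})"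
      unfolding L_def
    proof (rule bound1[OF PX E1 E2 G1 G2 _ mk1])
      fix y1 assume "y1 \<in> space MY1"
      then show "(\<integral>\<^sup>+x. (\<lambda>z. ennreal (k1v (fst z) (snd z))) (x, y1) \<partial>PX) \<le> 1"
        using Sigma1_le[of y1] unfolding Sigma1_def k1v_def by simp
    qed simp
    then show ?thesis by simp
  qed
  have int2: "(\<integral>\<^sup>+\<omega>. ennreal (k2v (fst \<omega>) (fst (snd \<omega>)) (snd (snd \<omega>))) \<partial>L) \<le> of_nat M2"
  proof -
    have "(\<integral>\<^sup>+\<omega>. ennreal (k2v (fst \<omega>) (fst (snd \<omega>)) (snd (snd \<omega>))) \<partial>L) \<le> of_nat (card {1..M1} * card {1..M2 div M1})"
      unfolding L_def
    proof (rule bound2[OF PX E1 E2 G1 G2 _ _ mk2])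
      fix y1 y2 assume "y1 \<in> space MY1" "y2 \<in> space MY2"
      then show "(\<integral>\<^sup>+x. ennreal (k2v (fst (x, y1, y2)) (fst (snd (x, y1, y2))) (snd (snd (x, y1, y2)))) \<partial>PX) \<le> 1"
        using Sigma2_le[of y1 y2] unfolding Sigma2_def k2v_def by simp
    qed simp_all
    also have "\<dots> \<le> of_nat M2"
      by (rule of_nat_mono) (simp add: times_div_less_eq_dividend)
    finally show ?thesis .
  qed
  have sp: "fst \<omega> \<in> space PX \<and> fst (snd \<omega>) \<in> space MY1 \<and> snd (snd \<omega>) \<in> space MY2"
    if "\<omega> \<in> space L" for \<omega>
  proof -
    have "\<omega> \<in> space PX \<times> (space MY1 \<times> space MY2)" using that unfolding spL space_pair_measure .
    then show ?thesis by (simp add: mem_Times_iff)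
  qed
  have onep: "0 < 1 + nu1" using nu1 by simp

  define T1 where "T1 = {\<omega> \<in> space L. dist1 (fst \<omega>) (fst (snd \<omega>)) \<le> d1 \<and> F1 (fst \<omega>) (fst (snd \<omega>)) \<ge> ln (real M1) + gamma1}"
  have T1m: "T1 \<in> sets L" unfolding T1_def sL spL F1_def by measurable
  have T1b: "measure L T1 \<le> exp (- gamma1)"
  proof -
    have "measure L T1 \<le> real M1 / (real M1 * exp gamma1)"
    proof (rule markov_helper[OF PL T1m])
      show "0 < real M1 * exp gamma1" using M1pos by simp
      show "(\<lambda>\<omega>. ennreal (k1v (fst \<omega>) (fst (snd \<omega>)))) \<in> borel_measurable L"
        using mk1N measurable_cong_sets[OF sL refl] by blast
      show "(\<integral>\<^sup>+\<omega>. ennreal (k1v (fst \<omega>) (fst (snd \<omega>))) \<partial>L) \<le> of_nat M1" by (rule int1)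
    next
      fix \<omega> assume w: "\<omega> \<in> T1"
      define x where "x = fst \<omega>"
      define y where "y = fst (snd \<omega>)"
      have xs: "x \<in> space PX" and ys: "y \<in> space MY1" using w sp unfolding T1_def x_def y_def by auto
      have D: "dist1 x y \<le> d1" and Fh: "F1 x y \<ge> ln (real M1) + gamma1" using w unfolding T1_def x_def y_def by auto
      have bp: "0 < beta2 x y powr (1 / (1 + nu1)) / beta1 x"
        using beta1_pos[OF xs] beta2_pos[OF xs ys] by simp
      have "k1v x y = exp (- (lam1 / (1 + nu1)) * dist1 x y + ln (beta2 x y powr (1 / (1 + nu1)) / beta1 x))"
        unfolding k1v_def exp_add using bp by simp
      also have "\<dots> \<ge> exp (ln (real M1) + gamma1)"
      proof (subst exp_le_cancel_iff)
        have "(lam1 / (1 + nu1)) * dist1 x y \<le> (lam1 / (1 + nu1)) * d1"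
          using D lam1 onep by (intro mult_left_mono) auto
        then show "ln (real M1) + gamma1 \<le> - (lam1 / (1 + nu1)) * dist1 x y + ln (beta2 x y powr (1 / (1 + nu1)) / beta1 x)"
          using Fh unfolding F1_def by simp
      qed
      finally show "real M1 * exp gamma1 \<le> k1v (fst \<omega>) (fst (snd \<omega>))"
        using M1pos unfolding x_def y_def by (simp add: exp_add)
    qed
    also have "\<dots> = exp (- gamma1)" using M1pos by (simp add: exp_minus field_simps)
    finally show ?thesis .
  qed

  define T2 where "T2 = {\<omega> \<in> space L. dist1 (fst \<omega>) (fst (snd \<omega>)) \<le> d1 \<and> dist2 (fst \<omega>) (snd (snd \<omega>)) \<le> d2
     \<and> F (fst \<omega>) \<ge> ln (real M2) + nu1 * gamma1 + gamma2 \<and> \<not> F1 (fst \<omega>) (fst (snd \<omega>)) \<ge> ln (real M1) + gamma1}"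
  have T2m: "T2 \<in> sets L" unfolding T2_def sL spL F1_def F_def by measurable
  have T2b: "measure L T2 \<le> exp (- gamma2)"
  proof -
    have M2pos: "0 < M2" using M1pos M12 by simp
    have "measure L T2 \<le> real M2 / (real M2 * exp gamma2)"
    proof (rule markov_helper[OF PL T2m])
      show "0 < real M2 * exp gamma2" using M2pos by simp
      show "(\<lambda>\<omega>. ennreal (k2v (fst \<omega>) (fst (snd \<omega>)) (snd (snd \<omega>)))) \<in> borel_measurable L"
        using mk2 measurable_cong_sets[OF sL refl] by blast
      show "(\<integral>\<^sup>+\<omega>. ennreal (k2v (fst \<omega>) (fst (snd \<omega>)) (snd (snd \<omega>))) \<partial>L) \<le> of_nat M2" by (rule int2)
    next
      fix \<omega> assume w: "\<omega> \<in> T2"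
      define x where "x = fst \<omega>"
      define y where "y = fst (snd \<omega>)"
      define z where "z = snd (snd \<omega>)"
      have xs: "x \<in> space PX" and ys: "y \<in> space MY1" using w sp unfolding T2_def x_def y_def by auto
      have D1: "dist1 x y \<le> d1" and D2: "dist2 x z \<le> d2" and Fh: "F x \<ge> ln (real M2) + nu1 * gamma1 + gamma2"
        and F1h: "\<not> F1 x y \<ge> ln (real M1) + gamma1" using w unfolding T2_def x_def y_def z_def by auto
      have b1: "0 < beta1 x" using beta1_pos[OF xs] .
      have b2: "0 < beta2 x y" using beta2_pos[OF xs ys] .
      let ?a = "ln (beta1 x)" and ?b = "ln (beta2 x y)" and ?q = "lam1 / (1 + nu1)"
      have hq: "(1 + nu1) * ?q = lam1" using onep by simp
      have Feq: "F x = (1+nu1)*(-?a) - lam1*d1 - lam2*d2 - nu1*ln (real M1)"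
        unfolding F_def using b1 by (simp add: ln_div)
      have F1eq: "F1 x y = (1/(1+nu1)*?b - ?a) - ?q*d1"
        unfolding F1_def using b1 b2 by (simp add: ln_div ln_powr)
      have Fa: "(1+nu1)*(-?a) - ((1+nu1)*?q)*d1 - lam2*d2 - nu1*ln (real M1) \<ge> ln (real M2) + nu1*gamma1 + gamma2"
        unfolding hq using Fh Feq by linarith
      have F1a: "(1/(1+nu1)*?b - ?a) - ?q*d1 < ln (real M1) + gamma1"
        using F1h F1eq by linarith
      have qn: "0 \<le> ?q" using lam1 onep by simp
      have key: "- ?q * dist1 x y - lam2 * dist2 x z - ?a - (nu1/(1+nu1)) * ?b \<ge> ln (real M2) + gamma2"
        by (rule arith2[OF nu1 qn lam2 D1 D2 Fa F1a])
      have "k2v x y z = exp (- ?q * dist1 x y - lam2 * dist2 x z - ?a - (nu1/(1+nu1)) * ?b)"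
        unfolding k2v_def using b1 b2 by (simp add: exp_diff powr_def exp_add mult.commute)
      also have "\<dots> \<ge> exp (ln (real M2) + gamma2)" using key by simp
      finally show "real M2 * exp gamma2 \<le> k2v (fst \<omega>) (fst (snd \<omega>)) (snd (snd \<omega>))"
        using M2pos unfolding x_def y_def z_def by (simp add: exp_add)
    qed
    also have "\<dots> = exp (- gamma2)" using M2pos by (simp add: exp_minus field_simps)
    finally show ?thesis .
  qed

  define A1c where "A1c = {\<omega> \<in> space L. \<not> dist1 (fst \<omega>) (fst (snd \<omega>)) \<le> d1}"
  define A2c where "A2c = {\<omega> \<in> space L. \<not> (dist1 (fst \<omega>) (fst (snd \<omega>)) \<le> d1 \<and> dist2 (fst \<omega>) (snd (snd \<omega>)) \<le> d2)}"
  have A1m: "A1c \<in> sets L" unfolding A1c_def sL spL by measurable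
  have A2m: "A2c \<in> sets L" unfolding A2c_def sL spL by measurable
  define S1 where "S1 = {\<omega> \<in> space L. F1 (fst \<omega>) (fst (snd \<omega>)) \<ge> ln (real M1) + gamma1}"
  define S2 where "S2 = {\<omega> \<in> space L. F (fst \<omega>) \<ge> ln (real M2) + nu1 * gamma1 + gamma2
                   \<or> F1 (fst \<omega>) (fst (snd \<omega>)) \<ge> ln (real M1) + gamma1}"
  have "measure L S1 \<le> measure L (A1c \<union> T1)"
    by (rule L.finite_measure_mono[OF _ sets.Un[OF A1m T1m]]) (auto simp: S1_def A1c_def T1_def)
  also have "\<dots> \<le> measure L A1c + measure L T1"
    by (rule fm_subadd[OF PL A1m T1m])
  finally have P1: "measure L S1 \<le> eps1 + exp (- gamma1)" using eps1 T1b unfolding A1c_def by simp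
  have "measure L S2 \<le> measure L (A2c \<union> T1 \<union> T2)"
    by (rule L.finite_measure_mono[OF _ sets.Un[OF sets.Un[OF A2m T1m] T2m]]) (auto simp: S2_def A2c_def T1_def T2_def)
  also have "\<dots> \<le> measure L (A2c \<union> T1) + measure L T2"
    by (rule fm_subadd[OF PL sets.Un[OF A2m T1m] T2m])
  also have "\<dots> \<le> measure L A2c + measure L T1 + measure L T2"
    using fm_subadd[OF PL A2m T1m] by simp
  finally have P2: "measure L S2 \<le> eps2 + exp (- gamma1) + exp (- gamma2)"
    using eps2 T1b T2b unfolding A2c_def by simp
  show ?thesis using P1 P2 unfolding S1_def S2_def by simp
qed

end
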